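(* Let $G$ be a locally nilpotent group which is not periodic. Then $G$ contains no finite contranormal subgroups.
   Context: A subgroup $H$ of $G$ is contranormal in $G$ if its normal closure $H^G$ equals $G$. *)

theory Defs
  imports "HOL-Algebra.Algebra"
begin

definition commutator_subgroup :: "('a, 'b) monoid_scheme \<Rightarrow> 'a set \<Rightarrow> 'a set \<Rightarrow> 'a set" where
  "commutator_subgroup G H K =
     generate G {h \<otimes>\<^bsub>G\<^esub> k \<otimes>\<^bsub>G\<^esub> inv\<^bsub>G\<^esub> h \<otimes>\<^bsub>G\<^esub> inv\<^bsub>G\<^esub> k | h k. h \<in> H \<and> k \<in> K}"

text \<open>Lower central series: gamma_1 = G (index 0 here), gamma_(i+1) = [gamma_i, G].\<close>
fun lower_central :: "('a, 'b) monoid_scheme \<Rightarrow> nat \<Rightarrow> 'a set" where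
  "lower_central G 0 = carrier G"
| "lower_central G (Suc n) = commutator_subgroup G (lower_central G n) (carrier G)"

definition nilpotent_group :: "('a, 'b) monoid_scheme \<Rightarrow> bool" where
  "nilpotent_group G \<longleftrightarrow> group G \<and> (\<exists>n. lower_central G n = {\<one>\<^bsub>G\<^esub>})"

definition locally_nilpotent :: "('a, 'b) monoid_scheme \<Rightarrow> bool" where
  "locally_nilpotent G \<longleftrightarrow> group G \<and>
     (\<forall>S. finite S \<and> S \<subseteq> carrier G \<longrightarrow> nilpotent_group (subgroup_generated G S))"

definition periodic_group :: "('a, 'b) monoid_scheme \<Rightarrow> bool" where
  "periodic_group G \<longleftrightarrow> (\<forall>x \<in> carrier G. \<exists>n::nat. n > 0 \<and> x [^]\<^bsub>G\<^esub> n = \<one>\<^bsub>G\<^esub>)"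

definition normal_closure :: "('a, 'b) monoid_scheme \<Rightarrow> 'a set \<Rightarrow> 'a set" where
  "normal_closure G H = \<Inter> {N. N \<lhd> G \<and> H \<subseteq> N}"

definition contranormal :: "'a set \<Rightarrow> ('a, 'b) monoid_scheme \<Rightarrow> bool" where
  "contranormal H G \<longleftrightarrow> subgroup H G \<and> normal_closure G H = carrier G"

end

theory Submission
  imports Defs
begin


definition per :: "('a,'b) monoid_scheme \<Rightarrow> 'a set \<Rightarrow> bool" where
  "per G A \<longleftrightarrow> (\<forall>x\<in>A. \<exists>n::nat. n > 0 \<and> x [^]\<^bsub>G\<^esub> n = \<one>\<^bsub>G\<^esub>)"

definition rnorm :: "('a,'b) monoid_scheme \<Rightarrow> 'a set \<Rightarrow> 'a set \<Rightarrow> bool" where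
  "rnorm G A N \<longleftrightarrow> subgroup A G \<and> A \<subseteq> N \<and>
     (\<forall>x\<in>N. \<forall>a\<in>A. x \<otimes>\<^bsub>G\<^esub> a \<otimes>\<^bsub>G\<^esub> inv\<^bsub>G\<^esub> x \<in> A)"

definition pset :: "('a,'b) monoid_scheme \<Rightarrow> 'a set \<Rightarrow> 'a set \<Rightarrow> 'a set" where
  "pset G A B = {a \<otimes>\<^bsub>G\<^esub> b | a b. a \<in> A \<and> b \<in> B}"

context group begin

lemma inv_cancel_l [simp]: "x \<in> carrier G \<Longrightarrow> y \<in> carrier G \<Longrightarrow> inv x \<otimes> (x \<otimes> y) = y"
  by (simp add: m_assoc[symmetric])
lemma inv_cancel_l2 [simp]: "x \<in> carrier G \<Longrightarrow> y \<in> carrier G \<Longrightarrow> x \<otimes> (inv x \<otimes> y) = y"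
  by (simp add: m_assoc[symmetric])

lemma conj_pow:
  assumes "x \<in> carrier G" "p \<in> carrier G"
  shows "(x \<otimes> p \<otimes> inv x) [^] (n::nat) = x \<otimes> p [^] n \<otimes> inv x"
proof (induction n)
  case 0 then show ?case using assms by simp
next
  case (Suc n)
  have "(x \<otimes> p \<otimes> inv x) [^] Suc n = (x \<otimes> p [^] n \<otimes> inv x) \<otimes> (x \<otimes> p \<otimes> inv x)"
    using Suc by simp
  also have "\<dots> = x \<otimes> (p [^] n \<otimes> p) \<otimes> inv x"
    using assms by (simp add: m_assoc)
  finally show ?case by simp
qed

lemma pset_rnorm_per:
  assumes N: "subgroup N G" and A: "rnorm G A N" "per G A" and B: "rnorm G B N" "per G B"
  shows "rnorm G (pset G A B) N \<and> per G (pset G A B)"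
proof -
  have sA: "subgroup A G" and sB: "subgroup B G" using A B by (auto simp: rnorm_def)
  have AC: "A \<subseteq> carrier G" and BC: "B \<subseteq> carrier G" using sA sB subgroup.subset by blast+
  have AN: "A \<subseteq> N" and BN: "B \<subseteq> N" using A B by (auto simp: rnorm_def)
  have NC: "N \<subseteq> carrier G" using N subgroup.subset by blast
  have Bc: "x \<otimes> b \<otimes> inv x \<in> B" if "x \<in> N" "b \<in> B" for x b using B that by (auto simp: rnorm_def)
  have Ac: "x \<otimes> b \<otimes> inv x \<in> A" if "x \<in> N" "b \<in> A" for x b using A that by (auto simp: rnorm_def)
  have Bc': "inv a \<otimes> b \<otimes> a \<in> B" if "a \<in> A" "b \<in> B" for a b
  proof -
    have "inv a \<in> N" using that AN by (intro subgroup.m_inv_closed[OF N]) auto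
    then have "inv a \<otimes> b \<otimes> inv (inv a) \<in> B" using Bc that by simp
    moreover have "a \<in> carrier G" using that AC by auto
    ultimately show ?thesis by simp
  qed
  have sub: "subgroup (pset G A B) G"
  proof (rule subgroupI)
    show "pset G A B \<subseteq> carrier G" using AC BC by (auto simp: pset_def)
    show "pset G A B \<noteq> {}" using sA sB unfolding pset_def
      by (auto intro!: exI[of _ \<one>] dest: subgroup.one_closed)
  next
    fix z assume "z \<in> pset G A B"
    then obtain a b where ab: "a \<in> A" "b \<in> B" "z = a \<otimes> b" by (auto simp: pset_def)
    have ac: "a \<in> carrier G" and bc: "b \<in> carrier G" using ab AC BC by auto
    have "inv z = inv a \<otimes> (a \<otimes> inv b \<otimes> inv a)"
      using ac bc ab by (simp add: inv_mult_group m_assoc)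
    moreover have "inv a \<in> A" using ab by (intro subgroup.m_inv_closed[OF sA])
    moreover have "a \<otimes> inv b \<otimes> inv a \<in> B"
      using ab AN by (intro Bc subgroup.m_inv_closed[OF sB]) auto
    ultimately show "inv z \<in> pset G A B" by (auto simp: pset_def)
  next
    fix z w assume "z \<in> pset G A B" "w \<in> pset G A B"
    then obtain a b a' b' where ab: "a \<in> A" "b \<in> B" "z = a \<otimes> b" "a' \<in> A" "b' \<in> B" "w = a' \<otimes> b'"
      by (auto simp: pset_def)
    have c: "a \<in> carrier G" "b \<in> carrier G" "a' \<in> carrier G" "b' \<in> carrier G" using ab AC BC by auto
    have "z \<otimes> w = (a \<otimes> a') \<otimes> ((inv a' \<otimes> b \<otimes> a') \<otimes> b')"
      using c ab by (simp add: m_assoc)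
    moreover have "a \<otimes> a' \<in> A" using ab by (intro subgroup.m_closed[OF sA])
    moreover have "(inv a' \<otimes> b \<otimes> a') \<otimes> b' \<in> B" using ab by (intro Bc' subgroup.m_closed[OF sB])
    ultimately show "z \<otimes> w \<in> pset G A B" by (auto simp: pset_def)
  qed
  have subN: "pset G A B \<subseteq> N" using AN BN by (auto simp: pset_def intro!: subgroup.m_closed[OF N])
  have cj: "x \<otimes> z \<otimes> inv x \<in> pset G A B" if xN: "x \<in> N" and zP: "z \<in> pset G A B" for x z
  proof -
    obtain a b where ab: "a \<in> A" "b \<in> B" "z = a \<otimes> b" using zP unfolding pset_def by blast
    have c: "a \<in> carrier G" "b \<in> carrier G" "x \<in> carrier G" using ab AC BC NC xN by auto
    have "x \<otimes> z \<otimes> inv x = (x \<otimes> a \<otimes> inv x) \<otimes> (x \<otimes> b \<otimes> inv x)"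
      using c ab by (simp add: m_assoc)
    moreover have "x \<otimes> a \<otimes> inv x \<in> A" "x \<otimes> b \<otimes> inv x \<in> B" using Ac Bc ab xN by auto
    ultimately show ?thesis unfolding pset_def by blast
  qed
  have per: "per G (pset G A B)"
    unfolding per_def
  proof
    fix z assume "z \<in> pset G A B"
    then obtain a b where ab: "a \<in> A" "b \<in> B" "z = a \<otimes> b" by (auto simp: pset_def)
    have c: "a \<in> carrier G" "b \<in> carrier G" using ab AC BC by auto
    have key: "\<exists>b'\<in>B. (a \<otimes> b) [^] k = a [^] k \<otimes> b'" for k :: nat
    proof (induction k)
      case 0 then show ?case using subgroup.one_closed[OF sB] by (intro bexI[of _ \<one>]) auto
    next
      case (Suc k)
      then obtain b' where b': "b' \<in> B" "(a \<otimes> b) [^] k = a [^] k \<otimes> b'" by blast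
      have b'c: "b' \<in> carrier G" using b' BC by auto
      have "(a \<otimes> b) [^] Suc k = a [^] k \<otimes> b' \<otimes> (a \<otimes> b)" using b' by simp
      also have "\<dots> = (a [^] k \<otimes> a) \<otimes> ((inv a \<otimes> b' \<otimes> a) \<otimes> b)"
        using c b'c by (simp add: m_assoc)
      also have "\<dots> = a [^] Suc k \<otimes> ((inv a \<otimes> b' \<otimes> a) \<otimes> b)" by simp
      finally show ?case using ab b' by (intro bexI[of _ "(inv a \<otimes> b' \<otimes> a) \<otimes> b"] subgroup.m_closed[OF sB] Bc')
    qed
    obtain n :: nat where n: "n > 0" "a [^] n = \<one>" using A(2) ab(1) unfolding per_def by blast
    obtain b' where b': "b' \<in> B" "(a \<otimes> b) [^] n = b'" using key[of n] n c BC by auto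
    obtain m :: nat where m: "m > 0" "b' [^] m = \<one>" using B(2) b'(1) unfolding per_def by blast
    have "(a \<otimes> b) [^] (n * m) = \<one>" using b' m c by (simp add: nat_pow_pow[symmetric])
    then show "\<exists>k::nat. k > 0 \<and> z [^] k = \<one>" using n m ab by (intro exI[of _ "n*m"]) auto
  qed
  show ?thesis using sub subN cj per by (auto simp: rnorm_def)
qed

end


definition cset :: "('a,'b) monoid_scheme \<Rightarrow> 'a \<Rightarrow> 'a set \<Rightarrow> 'a set" where
  "cset G x P = (\<lambda>p. x \<otimes>\<^bsub>G\<^esub> p \<otimes>\<^bsub>G\<^esub> inv\<^bsub>G\<^esub> x) ` P"

lemma per_mono: "per G B \<Longrightarrow> A \<subseteq> B \<Longrightarrow> per G A"
  unfolding per_def by blast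

context group begin

lemma rnorm_one: assumes N: "subgroup N G" shows "rnorm G {\<one>} N"
proof -
  have "x \<otimes> \<one> \<otimes> inv x = \<one>" if "x \<in> N" for x using that subgroup.mem_carrier[OF N] by simp
  then show ?thesis unfolding rnorm_def by (auto simp: triv_subgroup subgroup.one_closed[OF N])
qed

lemma per_one: "per G {\<one>}"
  unfolding per_def by (auto intro!: exI[of _ "1::nat"])

lemma gen_family:
  assumes N: "subgroup N G" and F: "\<And>A. A \<in> F \<Longrightarrow> rnorm G A N \<and> per G A"
    and x: "x \<in> generate G (\<Union>F)"
  shows "\<exists>A. rnorm G A N \<and> per G A \<and> x \<in> A"
  using x
proof (induction rule: generate.induct)
  case one
  then show ?case using rnorm_one[OF N] per_one by blast
next
  case (incl h)
  then show ?case using F by blast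
next
  case (inv h)
  then obtain A where A: "A \<in> F" "h \<in> A" by blast
  then have "subgroup A G" using F by (auto simp: rnorm_def)
  then have "inv h \<in> A" using A by (intro subgroup.m_inv_closed)
  then show ?case using F A by blast
next
  case (eng h1 h2)
  then obtain A B where AB: "rnorm G A N" "per G A" "h1 \<in> A" "rnorm G B N" "per G B" "h2 \<in> B"
    by blast
  have "h1 \<otimes> h2 \<in> pset G A B" using AB unfolding pset_def by blast
  then show ?case using pset_rnorm_per[OF N AB(1,2,4,5)] by blast
qed

lemma gen_family_per:
  assumes N: "subgroup N G" and F: "\<And>A. A \<in> F \<Longrightarrow> rnorm G A N \<and> per G A"
  shows "per G (generate G (\<Union>F))"
  unfolding per_def
proof
  fix x assume "x \<in> generate G (\<Union>F)"
  then obtain A where "per G A" "x \<in> A" using gen_family[OF N F] by blast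
  then show "\<exists>n::nat. n > 0 \<and> x [^] n = \<one>" unfolding per_def by blast
qed

lemma gen_rnorm:
  assumes N: "subgroup N G" and U: "U \<subseteq> N"
    and cl: "\<And>x u. x \<in> N \<Longrightarrow> u \<in> U \<Longrightarrow> x \<otimes> u \<otimes> inv x \<in> U"
  shows "rnorm G (generate G U) N"
proof -
  have NC: "N \<subseteq> carrier G" using N subgroup.subset by blast
  have UC: "U \<subseteq> carrier G" using U NC by blast
  have cl2: "x \<otimes> h \<otimes> inv x \<in> generate G U" if x: "x \<in> N" and h: "h \<in> generate G U" for x h
    using h
  proof (induction rule: generate.induct)
    case one
    have "x \<in> carrier G" using x NC by auto
    then show ?case by (simp add: generate.one)
  next
    case (incl h)
    then show ?case using cl[OF x] by (intro generate.incl)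
  next
    case (inv h)
    have hc: "h \<in> carrier G" and xc: "x \<in> carrier G" using inv UC x NC by auto
    have "inv (x \<otimes> h \<otimes> inv x) = x \<otimes> inv h \<otimes> inv x"
      using hc xc by (simp add: inv_mult_group m_assoc)
    moreover have "inv (x \<otimes> h \<otimes> inv x) \<in> generate G U"
      using generate_m_inv_closed[OF UC generate.incl[OF cl[OF x inv]]] .
    ultimately show ?case by simp
  next
    case (eng h1 h2)
    have c: "h1 \<in> carrier G" "h2 \<in> carrier G" "x \<in> carrier G"
      using eng(1,2) generate_in_carrier[OF UC] x NC by auto
    have "x \<otimes> (h1 \<otimes> h2) \<otimes> inv x = (x \<otimes> h1 \<otimes> inv x) \<otimes> (x \<otimes> h2 \<otimes> inv x)"
      using c by (simp add: m_assoc)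
    then show ?case using generate.eng[OF eng(3,4)] by simp
  qed
  have sg: "subgroup (generate G U) G" using generate_is_subgroup[OF UC] .
  have sb: "generate G U \<subseteq> N" using generate_subgroup_incl[OF U N] .
  show ?thesis unfolding rnorm_def by (intro conjI ballI sg sb cl2)
qed

lemma conj_set_rnorm:
  assumes N0: "subgroup N0 G" and N1: "rnorm G N1 N0" and P: "rnorm G P N1" "per G P"
    and x: "x \<in> N0"
  shows "rnorm G (cset G x P) N1 \<and> per G (cset G x P)"
proof -
  have N0C: "N0 \<subseteq> carrier G" using N0 subgroup.subset by blast
  have sN1: "subgroup N1 G" and N10: "N1 \<subseteq> N0" and cl1: "\<And>y a. y \<in> N0 \<Longrightarrow> a \<in> N1 \<Longrightarrow> y \<otimes> a \<otimes> inv y \<in> N1"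
    using N1 unfolding rnorm_def by auto
  have sP: "subgroup P G" and P1: "P \<subseteq> N1" and clP: "\<And>y a. y \<in> N1 \<Longrightarrow> a \<in> P \<Longrightarrow> y \<otimes> a \<otimes> inv y \<in> P"
    using P unfolding rnorm_def by auto
  have xc: "x \<in> carrier G" using x N0C by auto
  have PC: "P \<subseteq> carrier G" using P1 N10 N0C by auto
  have sub: "subgroup (cset G x P) G"
  proof (rule subgroupI)
    show "cset G x P \<subseteq> carrier G" using PC xc unfolding cset_def by auto
    show "cset G x P \<noteq> {}" using subgroup.one_closed[OF sP] unfolding cset_def by auto
  next
    fix a assume "a \<in> cset G x P"
    then obtain p where p: "p \<in> P" "a = x \<otimes> p \<otimes> inv x" unfolding cset_def by blast
    have pc: "p \<in> carrier G" using p PC by auto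
    have "inv a = x \<otimes> inv p \<otimes> inv x" using p pc xc by (simp add: inv_mult_group m_assoc)
    moreover have "inv p \<in> P" using p by (intro subgroup.m_inv_closed[OF sP])
    ultimately show "inv a \<in> cset G x P" unfolding cset_def by blast
  next
    fix a b assume "a \<in> cset G x P" "b \<in> cset G x P"
    then obtain p q where pq: "p \<in> P" "a = x \<otimes> p \<otimes> inv x" "q \<in> P" "b = x \<otimes> q \<otimes> inv x"
      unfolding cset_def by blast
    have c: "p \<in> carrier G" "q \<in> carrier G" using pq PC by auto
    have "a \<otimes> b = x \<otimes> (p \<otimes> q) \<otimes> inv x" using pq c xc by (simp add: m_assoc)
    moreover have "p \<otimes> q \<in> P" using pq by (intro subgroup.m_closed[OF sP])
    ultimately show "a \<otimes> b \<in> cset G x P" unfolding cset_def by blast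
  qed
  have sub1: "cset G x P \<subseteq> N1"
  proof
    fix a assume "a \<in> cset G x P"
    then obtain p where p: "p \<in> P" "a = x \<otimes> p \<otimes> inv x" unfolding cset_def by blast
    then show "a \<in> N1" using cl1[OF x] P1 by auto
  qed
  have cl: "y \<otimes> a \<otimes> inv y \<in> cset G x P" if y: "y \<in> N1" and a: "a \<in> cset G x P" for y a
  proof -
    obtain p where p: "p \<in> P" "a = x \<otimes> p \<otimes> inv x" using a unfolding cset_def by blast
    have c: "p \<in> carrier G" "y \<in> carrier G" using p PC y N10 N0C by auto
    have ix: "inv x \<in> N0" using x by (intro subgroup.m_inv_closed[OF N0])
    have z1: "inv x \<otimes> y \<otimes> x \<in> N1" using cl1[OF ix y] xc by simp
    have zc: "inv x \<otimes> y \<otimes> x \<in> carrier G" using c xc by simp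
    have "y \<otimes> a \<otimes> inv y = x \<otimes> ((inv x \<otimes> y \<otimes> x) \<otimes> p \<otimes> inv (inv x \<otimes> y \<otimes> x)) \<otimes> inv x"
      using p c xc by (simp add: m_assoc inv_mult_group)
    moreover have "(inv x \<otimes> y \<otimes> x) \<otimes> p \<otimes> inv (inv x \<otimes> y \<otimes> x) \<in> P" using clP[OF z1 p(1)] .
    ultimately show ?thesis unfolding cset_def by blast
  qed
  have per: "per G (cset G x P)"
    unfolding per_def
  proof
    fix a assume "a \<in> cset G x P"
    then obtain p where p: "p \<in> P" "a = x \<otimes> p \<otimes> inv x" unfolding cset_def by blast
    obtain n :: nat where n: "n > 0" "p [^] n = \<one>" using P(2) p(1) unfolding per_def by blast
    have "p \<in> carrier G" using p PC by auto
    then have "a [^] n = \<one>" using p n xc by (simp add: conj_pow)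
    then show "\<exists>n::nat. n > 0 \<and> a [^] n = \<one>" using n by blast
  qed
  have "rnorm G (cset G x P) N1" unfolding rnorm_def
    by (intro conjI sub sub1 ballI cl)
  then show ?thesis using per by simp
qed

lemma chain_sub:
  assumes "\<forall>i<c. rnorm G (Nc (Suc i)) (Nc i)"
  shows "j + d \<le> c \<Longrightarrow> Nc (j + d) \<subseteq> Nc j"
proof (induction d)
  case 0 then show ?case by simp
next
  case (Suc d)
  then have "rnorm G (Nc (Suc (j + d))) (Nc (j + d))" using assms by auto
  then have "Nc (Suc (j + d)) \<subseteq> Nc (j + d)" unfolding rnorm_def by blast
  then show ?case using Suc by auto
qed

lemma chain_per:
  "\<And>Nc. subgroup (Nc 0) G \<Longrightarrow> (\<forall>i<c. rnorm G (Nc (Suc i)) (Nc i)) \<Longrightarrow> per G (Nc c) \<Longrightarrow>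
     per G (generate G (\<Union>x\<in>Nc 0. cset G x (Nc c)))"
proof (induction c)
  case 0
  fix Nc :: "nat \<Rightarrow> 'a set"
  assume N0: "subgroup (Nc 0) G" and "per G (Nc 0)"
  have "(\<Union>x\<in>Nc 0. cset G x (Nc 0)) \<subseteq> Nc 0"
    unfolding cset_def
    by (auto intro!: subgroup.m_closed[OF N0] subgroup.m_inv_closed[OF N0])
  then have "generate G (\<Union>x\<in>Nc 0. cset G x (Nc 0)) \<subseteq> Nc 0"
    using generate_subgroup_incl N0 by blast
  then show "per G (generate G (\<Union>x\<in>Nc 0. cset G x (Nc 0)))" using per_mono \<open>per G (Nc 0)\<close> by blast
next
  case (Suc c)
  fix Nc :: "nat \<Rightarrow> 'a set"
  assume N0: "subgroup (Nc 0) G" and ch: "\<forall>i<Suc c. rnorm G (Nc (Suc i)) (Nc i)"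
    and pH: "per G (Nc (Suc c))"
  define H where "H = Nc (Suc c)"
  define N1 where "N1 = Nc 1"
  have r1: "rnorm G N1 (Nc 0)" using ch[rule_format, of 0] unfolding N1_def by simp
  have sN1: "subgroup N1 G" using r1 unfolding rnorm_def by blast
  define P where "P = generate G (\<Union>x\<in>N1. cset G x H)"
  have sN1': "subgroup (Nc (Suc 0)) G" using sN1 unfolding N1_def by simp
  have ch': "\<forall>i<c. rnorm G (Nc (Suc (Suc i))) (Nc (Suc i))"
  proof (intro allI impI)
    fix i assume "i < c" then have "Suc i < Suc c" by simp
    then show "rnorm G (Nc (Suc (Suc i))) (Nc (Suc i))" using ch by blast
  qed
  have "per G (generate G (\<Union>x\<in>Nc (Suc 0). cset G x (Nc (Suc c))))"
    using Suc.IH[of "\<lambda>i. Nc (Suc i)", OF sN1' ch' pH] .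
  then have perP: "per G P" unfolding P_def N1_def H_def by simp
  have "Nc (1 + c) \<subseteq> Nc 1" using chain_sub[OF ch, of 1 c] by simp
  then have HN1: "H \<subseteq> N1" unfolding H_def N1_def by simp
  have N1C: "N1 \<subseteq> carrier G" using sN1 subgroup.subset by blast
  have HC: "H \<subseteq> carrier G" using HN1 N1C by blast
  have UN1: "(\<Union>x\<in>N1. cset G x H) \<subseteq> N1"
  proof
    fix u assume "u \<in> (\<Union>x\<in>N1. cset G x H)"
    then obtain x h where xh: "x \<in> N1" "h \<in> H" "u = x \<otimes> h \<otimes> inv x" unfolding cset_def by blast
    then show "u \<in> N1" using HN1
      by (auto intro!: subgroup.m_closed[OF sN1] subgroup.m_inv_closed[OF sN1])
  qed
  have rP: "rnorm G P N1"
    unfolding P_def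
  proof (rule gen_rnorm[OF sN1 UN1])
    fix y u assume y: "y \<in> N1" and u: "u \<in> (\<Union>x\<in>N1. cset G x H)"
    then obtain x h where xh: "x \<in> N1" "h \<in> H" "u = x \<otimes> h \<otimes> inv x" unfolding cset_def by blast
    have c: "x \<in> carrier G" "h \<in> carrier G" "y \<in> carrier G" using xh y N1C HC by auto
    have "y \<otimes> u \<otimes> inv y = (y \<otimes> x) \<otimes> h \<otimes> inv (y \<otimes> x)"
      using xh c by (simp add: m_assoc inv_mult_group)
    moreover have "y \<otimes> x \<in> N1" using y xh by (intro subgroup.m_closed[OF sN1])
    ultimately show "y \<otimes> u \<otimes> inv y \<in> (\<Union>x\<in>N1. cset G x H)" using xh unfolding cset_def by blast
  qed
  define F where "F = (\<lambda>x. cset G x P) ` Nc 0"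
  have F: "rnorm G A N1 \<and> per G A" if "A \<in> F" for A
    using that conj_set_rnorm[OF N0 r1 rP perP] unfolding F_def by blast
  have HP: "H \<subseteq> P"
  proof
    fix h assume h: "h \<in> H"
    have "\<one> \<in> N1" using subgroup.one_closed[OF sN1] .
    moreover have "h = \<one> \<otimes> h \<otimes> inv \<one>" using h HC by auto
    ultimately have "h \<in> (\<Union>x\<in>N1. cset G x H)" using h unfolding cset_def by blast
    then show "h \<in> P" unfolding P_def by (rule generate.incl)
  qed
  have "(\<Union>x\<in>Nc 0. cset G x H) \<subseteq> \<Union>F"
  proof
    fix u assume "u \<in> (\<Union>x\<in>Nc 0. cset G x H)"
    then obtain x where x: "x \<in> Nc 0" "u \<in> cset G x H" by blast
    have "cset G x H \<subseteq> cset G x P" using HP unfolding cset_def by (rule image_mono)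
    moreover have "cset G x P \<in> F" using x unfolding F_def by blast
    ultimately show "u \<in> \<Union>F" using x by blast
  qed
  then have sb: "generate G (\<Union>x\<in>Nc 0. cset G x H) \<subseteq> generate G (\<Union>F)" by (rule mono_generate)
  have pF: "per G (generate G (\<Union>F))" using gen_family_per[OF sN1 F] by blast
  show "per G (generate G (\<Union>x\<in>Nc 0. cset G x (Nc (Suc c))))"
    using per_mono[OF pF sb] unfolding H_def .
qed

end


context group begin

lemma lc_normal: "lower_central G i \<lhd> G"
proof (induction i)
  case 0
  show ?case by (simp add: normal_invI subgroup_self)
next
  case (Suc i)
  have sub: "lower_central G i \<subseteq> carrier G" using Suc normal_imp_subgroup subgroup.subset by blast
  have cl: "x \<otimes> h \<otimes> inv x \<in> lower_central G i" if "x \<in> carrier G" "h \<in> lower_central G i" for x h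
    using normal_invE(2)[OF Suc] that by blast
  let ?S = "{h \<otimes> k \<otimes> inv h \<otimes> inv k | h k. h \<in> lower_central G i \<and> k \<in> carrier G}"
  have S: "?S \<subseteq> carrier G" using sub by auto
  have "generate G ?S \<lhd> G"
  proof (rule normal_generateI[OF S])
    fix u g assume u: "u \<in> ?S" and g: "g \<in> carrier G"
    then obtain h k where hk: "h \<in> lower_central G i" "k \<in> carrier G" "u = h \<otimes> k \<otimes> inv h \<otimes> inv k" by blast
    have hc: "h \<in> carrier G" using hk sub by auto
    have "g \<otimes> u \<otimes> inv g = (g \<otimes> h \<otimes> inv g) \<otimes> (g \<otimes> k \<otimes> inv g) \<otimes> inv (g \<otimes> h \<otimes> inv g) \<otimes> inv (g \<otimes> k \<otimes> inv g)"
      using hk hc g by (simp add: m_assoc inv_mult_group)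
    moreover have "g \<otimes> h \<otimes> inv g \<in> lower_central G i" using cl g hk by blast
    moreover have "g \<otimes> k \<otimes> inv g \<in> carrier G" using g hk by simp
    ultimately show "g \<otimes> u \<otimes> inv g \<in> ?S" by blast
  qed
  then show ?case by (simp add: commutator_subgroup_def)
qed

lemma lc_sub: "lower_central G i \<subseteq> carrier G"
  using lc_normal normal_imp_subgroup subgroup.subset by blast

lemma lc_comm: "c \<in> lower_central G i \<Longrightarrow> k \<in> carrier G \<Longrightarrow> c \<otimes> k \<otimes> inv c \<otimes> inv k \<in> lower_central G (Suc i)"
  unfolding lower_central.simps commutator_subgroup_def by (rule generate.incl) blast

lemma lc_dec: "lower_central G (Suc i) \<subseteq> lower_central G i"
proof -
  have sg: "subgroup (lower_central G i) G" using lc_normal normal_imp_subgroup by blast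
  let ?S = "{h \<otimes> k \<otimes> inv h \<otimes> inv k | h k. h \<in> lower_central G i \<and> k \<in> carrier G}"
  have "?S \<subseteq> lower_central G i"
  proof
    fix u assume "u \<in> ?S"
    then obtain h k where hk: "h \<in> lower_central G i" "k \<in> carrier G" "u = h \<otimes> k \<otimes> inv h \<otimes> inv k" by blast
    have hc: "h \<in> carrier G" using hk lc_sub by auto
    have "inv h \<in> lower_central G i" using hk by (intro subgroup.m_inv_closed[OF sg])
    then have "k \<otimes> inv h \<otimes> inv k \<in> lower_central G i" using normal_invE(2)[OF lc_normal] hk by blast
    then have "h \<otimes> (k \<otimes> inv h \<otimes> inv k) \<in> lower_central G i" using subgroup.m_closed[OF sg hk(1)] by blast
    moreover have "u = h \<otimes> (k \<otimes> inv h \<otimes> inv k)" using hk hc by (simp add: m_assoc)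
    ultimately show "u \<in> lower_central G i" by (simp only:)
  qed
  then show ?thesis unfolding lower_central.simps commutator_subgroup_def
    by (rule generate_subgroup_incl[OF _ sg])
qed

lemma pset_normal_subgroup:
  assumes sA: "subgroup A G" and nB: "B \<lhd> G"
  shows "subgroup (pset G A B) G"
proof -
  have sB: "subgroup B G" using nB normal_imp_subgroup by blast
  have AC: "A \<subseteq> carrier G" and BC: "B \<subseteq> carrier G" using sA sB subgroup.subset by blast+
  have Bc: "x \<otimes> b \<otimes> inv x \<in> B" if "x \<in> carrier G" "b \<in> B" for x b using normal_invE(2)[OF nB] that by blast
  have Bc': "inv a \<otimes> b \<otimes> a \<in> B" if "a \<in> A" "b \<in> B" for a b
  proof -
    have ac: "a \<in> carrier G" using that AC by auto
    then have "inv a \<otimes> b \<otimes> inv (inv a) \<in> B" using Bc[of "inv a" b] that by simp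
    then show ?thesis using ac by simp
  qed
  show ?thesis
  proof (rule subgroupI)
    show "pset G A B \<subseteq> carrier G" using AC BC by (auto simp: pset_def)
    show "pset G A B \<noteq> {}" using sA sB unfolding pset_def
      by (auto intro!: exI[of _ \<one>] dest: subgroup.one_closed)
  next
    fix z assume "z \<in> pset G A B"
    then obtain a b where ab: "a \<in> A" "b \<in> B" "z = a \<otimes> b" by (auto simp: pset_def)
    have ac: "a \<in> carrier G" and bc: "b \<in> carrier G" using ab AC BC by auto
    have "inv z = inv a \<otimes> (a \<otimes> inv b \<otimes> inv a)"
      using ac bc ab by (simp add: inv_mult_group m_assoc)
    moreover have "inv a \<in> A" using ab by (intro subgroup.m_inv_closed[OF sA])
    moreover have "a \<otimes> inv b \<otimes> inv a \<in> B"
      using ab ac by (intro Bc subgroup.m_inv_closed[OF sB]) auto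
    ultimately show "inv z \<in> pset G A B" by (auto simp: pset_def)
  next
    fix z w assume "z \<in> pset G A B" "w \<in> pset G A B"
    then obtain a b a' b' where ab: "a \<in> A" "b \<in> B" "z = a \<otimes> b" "a' \<in> A" "b' \<in> B" "w = a' \<otimes> b'"
      by (auto simp: pset_def)
    have c: "a \<in> carrier G" "b \<in> carrier G" "a' \<in> carrier G" "b' \<in> carrier G" using ab AC BC by auto
    have "z \<otimes> w = (a \<otimes> a') \<otimes> ((inv a' \<otimes> b \<otimes> a') \<otimes> b')"
      using c ab by (simp add: m_assoc)
    moreover have "a \<otimes> a' \<in> A" using ab by (intro subgroup.m_closed[OF sA])
    moreover have "(inv a' \<otimes> b \<otimes> a') \<otimes> b' \<in> B" using ab by (intro Bc' subgroup.m_closed[OF sB])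
    ultimately show "z \<otimes> w \<in> pset G A B" by (auto simp: pset_def)
  qed
qed

lemma lc_chain:
  assumes sH: "subgroup H G"
  shows "rnorm G (pset G H (lower_central G (Suc i))) (pset G H (lower_central G i))"
proof -
  let ?L = "lower_central G i" and ?L' = "lower_central G (Suc i)"
  have HC: "H \<subseteq> carrier G" using sH subgroup.subset by blast
  have sL': "subgroup ?L' G" using lc_normal normal_imp_subgroup by blast
  have sg: "subgroup (pset G H ?L') G" using pset_normal_subgroup[OF sH lc_normal] .
  have sb: "pset G H ?L' \<subseteq> pset G H ?L" using lc_dec unfolding pset_def by blast
  have cl: "x \<otimes> y \<otimes> inv x \<in> pset G H ?L'" if x: "x \<in> pset G H ?L" and y: "y \<in> pset G H ?L'" for x y
  proof -
    obtain h c where hc: "h \<in> H" "c \<in> ?L" "x = h \<otimes> c" using x unfolding pset_def by blast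
    obtain h' d where hd: "h' \<in> H" "d \<in> ?L'" "y = h' \<otimes> d" using y unfolding pset_def by blast
    have cc: "h \<in> carrier G" "c \<in> carrier G" "h' \<in> carrier G" "d \<in> carrier G"
      using hc hd HC lc_sub by blast+
    define e where "e = inv h' \<otimes> c \<otimes> h' \<otimes> inv c"
    have "c \<otimes> inv h' \<otimes> inv c \<otimes> inv (inv h') \<in> ?L'" using lc_comm[OF hc(2), of "inv h'"] cc by simp
    then have "inv (c \<otimes> inv h' \<otimes> inv c \<otimes> inv (inv h')) \<in> ?L'" by (intro subgroup.m_inv_closed[OF sL'])
    moreover have "inv (c \<otimes> inv h' \<otimes> inv c \<otimes> inv (inv h')) = e"
      unfolding e_def using cc by (simp add: inv_mult_group m_assoc)
    ultimately have eL: "e \<in> ?L'" by simp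
    have "c \<otimes> d \<otimes> inv c \<in> ?L'" using normal_invE(2)[OF lc_normal] cc hd by blast
    then have e'L: "e \<otimes> (c \<otimes> d \<otimes> inv c) \<in> ?L'" using subgroup.m_closed[OF sL' eL] by blast
    then have e''L: "h \<otimes> (e \<otimes> (c \<otimes> d \<otimes> inv c)) \<otimes> inv h \<in> ?L'"
      using normal_invE(2)[OF lc_normal] cc by blast
    have hh: "h \<otimes> h' \<otimes> inv h \<in> H"
      using hc hd by (intro subgroup.m_closed[OF sH] subgroup.m_inv_closed[OF sH])
    have "x \<otimes> y \<otimes> inv x = (h \<otimes> h' \<otimes> inv h) \<otimes> (h \<otimes> (e \<otimes> (c \<otimes> d \<otimes> inv c)) \<otimes> inv h)"
      unfolding e_def using hc hd cc by (simp add: m_assoc inv_mult_group)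
    then show ?thesis using hh e''L unfolding pset_def by blast
  qed
  show ?thesis unfolding rnorm_def by (intro conjI ballI sg sb cl)
qed

lemma pset_carrier: "subgroup H G \<Longrightarrow> pset G H (carrier G) = carrier G"
proof
  assume sH: "subgroup H G"
  show "pset G H (carrier G) \<subseteq> carrier G" using subgroup.subset[OF sH] unfolding pset_def by auto
  show "carrier G \<subseteq> pset G H (carrier G)"
  proof
    fix k assume k: "k \<in> carrier G"
    then have "k = \<one> \<otimes> k" by simp
    then show "k \<in> pset G H (carrier G)" using k subgroup.one_closed[OF sH] unfolding pset_def by blast
  qed
qed

lemma pset_one: "subgroup H G \<Longrightarrow> pset G H {\<one>} = H"
proof
  assume sH: "subgroup H G"
  show "pset G H {\<one>} \<subseteq> H" using subgroup.subset[OF sH] unfolding pset_def by auto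
  show "H \<subseteq> pset G H {\<one>}"
  proof
    fix k assume k: "k \<in> H"
    then have "k = k \<otimes> \<one>" using subgroup.subset[OF sH] by auto
    then show "k \<in> pset G H {\<one>}" using k unfolding pset_def by blast
  qed
qed

lemma nilp_per:
  assumes nil: "nilpotent_group G" and sH: "subgroup H G" and pH: "per G H"
  shows "per G (generate G (\<Union>x\<in>carrier G. cset G x H))"
proof -
  obtain m where m: "lower_central G m = {\<one>}" using nil unfolding nilpotent_group_def by blast
  define Nc where "Nc = (\<lambda>i. pset G H (lower_central G i))"
  have N0: "Nc 0 = carrier G" unfolding Nc_def using pset_carrier[OF sH] by simp
  have Nm: "Nc m = H" unfolding Nc_def using pset_one[OF sH] m by simp
  have ch: "\<forall>i<m. rnorm G (Nc (Suc i)) (Nc i)" unfolding Nc_def using lc_chain[OF sH] by blast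
  have "subgroup (Nc 0) G" using N0 subgroup_self by simp
  from chain_per[OF this ch] pH N0 Nm show ?thesis by simp
qed

end


context group begin

lemma finite_per:
  assumes sH: "subgroup H G" and fH: "finite H"
  shows "per G H"
  unfolding per_def
proof
  fix x assume x: "x \<in> H"
  have xc: "x \<in> carrier G" using x subgroup.mem_carrier[OF sH] by blast
  have "range (\<lambda>n::nat. x [^] n) \<subseteq> H"
  proof
    fix y assume "y \<in> range (\<lambda>n::nat. x [^] n)"
    then obtain n :: nat where "y = x [^] n" by blast
    moreover have "x [^] n \<in> H"
    proof (induction n)
      case 0 then show ?case using subgroup.one_closed[OF sH] by simp
    next
      case (Suc n) then show ?case using subgroup.m_closed[OF sH Suc x] by simp
    qed
    ultimately show "y \<in> H" by simp
  qed
  then have "finite (range (\<lambda>n::nat. x [^] n))" using fH finite_subset by blast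
  then have "\<not> inj (\<lambda>n::nat. x [^] n)" using range_inj_infinite by blast
  then obtain i j :: nat where ij: "i \<noteq> j" "x [^] i = x [^] j" unfolding inj_def by blast
  have "\<exists>a b::nat. a < b \<and> x [^] a = x [^] b"
  proof (cases "i < j")
    case True then show ?thesis using ij by blast
  next
    case False then have "j < i" using ij by simp
    then show ?thesis using ij by metis
  qed
  then obtain a b :: nat where ab: "a < b" "x [^] a = x [^] b" by blast
  have "x [^] a \<otimes> x [^] (b - a) = x [^] b" using ab(1) xc by (simp add: nat_pow_mult)
  then have "x [^] b = x [^] a \<otimes> x [^] (b - a)" by simp
  then have "x [^] a = x [^] a \<otimes> x [^] (b - a)" using ab by simp
  then have "x [^] (b - a) = \<one>" using xc by simp
  then show "\<exists>n::nat. n > 0 \<and> x [^] n = \<one>" using ab by (intro exI[of _ "b - a"]) simp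
qed

lemma conj_gen:
  assumes U: "U \<subseteq> carrier G" and z: "z \<in> carrier G" and y: "y \<in> generate G U"
  shows "z \<otimes> y \<otimes> inv z \<in> generate G ((\<lambda>u. z \<otimes> u \<otimes> inv z) ` U)"
  using y
proof (induction rule: generate.induct)
  case one
  then show ?case using z by (simp add: generate.one)
next
  case (incl h)
  then show ?case by (intro generate.incl) blast
next
  case (inv h)
  have hc: "h \<in> carrier G" using inv U by auto
  have "inv (z \<otimes> h \<otimes> inv z) = z \<otimes> inv h \<otimes> inv z"
    using hc z by (simp add: inv_mult_group m_assoc)
  moreover have "inv (z \<otimes> h \<otimes> inv z) \<in> generate G ((\<lambda>u. z \<otimes> u \<otimes> inv z) ` U)"
    using inv by (intro generate.inv) blast
  ultimately show ?case by simp
next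
  case (eng h1 h2)
  have c: "h1 \<in> carrier G" "h2 \<in> carrier G"
    using eng(1,2) generate_in_carrier[OF U] by auto
  have "z \<otimes> (h1 \<otimes> h2) \<otimes> inv z = (z \<otimes> h1 \<otimes> inv z) \<otimes> (z \<otimes> h2 \<otimes> inv z)"
    using c z by (simp add: m_assoc)
  then show ?case using generate.eng[OF eng(3,4)] by simp
qed

lemma gen_transfer:
  assumes A: "A \<subseteq> carrier (subgroup_generated G S)"
  shows "generate G A \<subseteq> generate (subgroup_generated G S) A"
proof
  fix y assume "y \<in> generate G A"
  then show "y \<in> generate (subgroup_generated G S) A"
  proof (induction rule: generate.induct)
    case one
    then show ?case using generate.one[of "subgroup_generated G S" A] by simp
  next
    case (incl h) then show ?case by (rule generate.incl)
  next
    case (inv h)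
    then have "inv\<^bsub>subgroup_generated G S\<^esub> h \<in> generate (subgroup_generated G S) A"
      by (rule generate.inv)
    moreover have "inv\<^bsub>subgroup_generated G S\<^esub> h = inv h" using inv A inv_subgroup_generated by blast
    ultimately show ?case by simp
  next
    case (eng h1 h2)
    then show ?case using generate.eng[OF eng(3,4)] by simp
  qed
qed

lemma cset_carrier: "x \<in> carrier G \<Longrightarrow> H \<subseteq> carrier G \<Longrightarrow> cset G x H \<subseteq> carrier G"
  unfolding cset_def by auto

lemma main_aux:
  assumes ln: "locally_nilpotent G" and np: "\<not> periodic_group G"
    and sH: "subgroup H G" and fH: "finite H" and cH: "contranormal H G"
  shows False
proof -
  have HC: "H \<subseteq> carrier G" using sH subgroup.subset by blast
  obtain g where gc: "g \<in> carrier G" and gnp: "\<And>n::nat. n > 0 \<Longrightarrow> g [^] n \<noteq> \<one>"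
    using np unfolding periodic_group_def by blast
  define T where "T = {y. \<exists>W. finite W \<and> W \<subseteq> carrier G \<and> y \<in> generate G (\<Union>x\<in>W. cset G x H)}"
  have UC: "(\<Union>x\<in>W. cset G x H) \<subseteq> carrier G" if "W \<subseteq> carrier G" for W
    using that cset_carrier[OF _ HC] by blast
  have sT: "subgroup T G"
  proof (rule subgroupI)
    show "T \<subseteq> carrier G"
    proof
      fix y assume "y \<in> T"
      then obtain W where W: "W \<subseteq> carrier G" "y \<in> generate G (\<Union>x\<in>W. cset G x H)" unfolding T_def by blast
      show "y \<in> carrier G" by (rule generate_in_carrier[OF UC[OF W(1)] W(2)])
    qed
    have "\<one> \<in> generate G (\<Union>x\<in>{}. cset G x H)" by (rule generate.one)
    then have "\<one> \<in> T" unfolding T_def by blast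
    then show "T \<noteq> {}" by blast
  next
    fix a assume "a \<in> T"
    then obtain W where W: "finite W" "W \<subseteq> carrier G" "a \<in> generate G (\<Union>x\<in>W. cset G x H)"
      unfolding T_def by blast
    have "inv a \<in> generate G (\<Union>x\<in>W. cset G x H)" by (rule generate_m_inv_closed[OF UC[OF W(2)] W(3)])
    then show "inv a \<in> T" using W unfolding T_def by blast
  next
    fix a b assume "a \<in> T" "b \<in> T"
    then obtain W V where W: "finite W" "W \<subseteq> carrier G" "a \<in> generate G (\<Union>x\<in>W. cset G x H)"
      and V: "finite V" "V \<subseteq> carrier G" "b \<in> generate G (\<Union>x\<in>V. cset G x H)"
      unfolding T_def by blast
    have m1: "generate G (\<Union>x\<in>W. cset G x H) \<subseteq> generate G (\<Union>x\<in>W \<union> V. cset G x H)"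
      by (rule mono_generate) blast
    have m2: "generate G (\<Union>x\<in>V. cset G x H) \<subseteq> generate G (\<Union>x\<in>W \<union> V. cset G x H)"
      by (rule mono_generate) blast
    have "a \<otimes> b \<in> generate G (\<Union>x\<in>W \<union> V. cset G x H)"
      by (rule generate.eng[OF subsetD[OF m1 W(3)] subsetD[OF m2 V(3)]])
    moreover have "finite (W \<union> V)" "W \<union> V \<subseteq> carrier G" using W V by auto
    ultimately show "a \<otimes> b \<in> T" unfolding T_def by blast
  qed
  have nT: "T \<lhd> G"
  proof (rule normal_invI[OF sT])
    fix z y assume z: "z \<in> carrier G" and y: "y \<in> T"
    then obtain W where W: "finite W" "W \<subseteq> carrier G" "y \<in> generate G (\<Union>x\<in>W. cset G x H)"
      unfolding T_def by blast
    have c1: "z \<otimes> y \<otimes> inv z \<in> generate G ((\<lambda>u. z \<otimes> u \<otimes> inv z) ` (\<Union>x\<in>W. cset G x H))"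
      using conj_gen[OF UC[OF W(2)] z W(3)] .
    have c2: "(\<lambda>u. z \<otimes> u \<otimes> inv z) ` (\<Union>x\<in>W. cset G x H) \<subseteq> (\<Union>x\<in>(\<lambda>x. z \<otimes> x) ` W. cset G x H)"
    proof
      fix v assume "v \<in> (\<lambda>u. z \<otimes> u \<otimes> inv z) ` (\<Union>x\<in>W. cset G x H)"
      then obtain x h where xh: "x \<in> W" "h \<in> H" "v = z \<otimes> (x \<otimes> h \<otimes> inv x) \<otimes> inv z"
        unfolding cset_def by blast
      have c: "x \<in> carrier G" "h \<in> carrier G" using xh W(2) HC by auto
      have "v = (z \<otimes> x) \<otimes> h \<otimes> inv (z \<otimes> x)" using xh c z by (simp add: m_assoc inv_mult_group)
      then show "v \<in> (\<Union>x\<in>(\<lambda>x. z \<otimes> x) ` W. cset G x H)" using xh unfolding cset_def by blast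
    qed
    have "z \<otimes> y \<otimes> inv z \<in> generate G (\<Union>x\<in>(\<lambda>x. z \<otimes> x) ` W. cset G x H)"
      using subsetD[OF mono_generate[OF c2] c1] .
    moreover have "finite ((\<lambda>x. z \<otimes> x) ` W)" "(\<lambda>x. z \<otimes> x) ` W \<subseteq> carrier G" using W z by auto
    ultimately show "z \<otimes> y \<otimes> inv z \<in> T" unfolding T_def by blast
  qed
  have HT: "H \<subseteq> T"
  proof
    fix h assume h: "h \<in> H"
    have "h = \<one> \<otimes> h \<otimes> inv \<one>" using h HC by auto
    then have "h \<in> cset G \<one> H" using h unfolding cset_def by blast
    then have "h \<in> generate G (\<Union>x\<in>{\<one>}. cset G x H)" by (intro generate.incl) blast
    then show "h \<in> T" unfolding T_def by blast
  qed
  have "carrier G = normal_closure G H" using cH unfolding contranormal_def by simp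
  also have "\<dots> \<subseteq> T" unfolding normal_closure_def by (rule Inter_lower) (simp add: nT HT)
  finally have "g \<in> T" using gc by blast
  then obtain W where W: "finite W" "W \<subseteq> carrier G" "g \<in> generate G (\<Union>x\<in>W. cset G x H)"
    unfolding T_def by blast
  define S where "S = H \<union> W"
  define K where "K = subgroup_generated G S"
  have SC: "S \<subseteq> carrier G" "finite S" using W HC fH unfolding S_def by auto
  have nK: "nilpotent_group K" using ln SC unfolding locally_nilpotent_def K_def by blast
  have gK: "group K" unfolding K_def by simp
  have SK: "S \<subseteq> carrier K" unfolding K_def using subgroup_generated_subset_carrier_subset[OF SC(1)] .
  have sHK: "subgroup H K" unfolding K_def using subgroup_of_subgroup_generated[of H S] sH S_def by blast
  have pHK: "per K H" using group.finite_per[OF gK sHK fH] .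
  have perK: "per K (generate K (\<Union>x\<in>carrier K. cset K x H))"
    using group.nilp_per[OF gK nK sHK pHK] .
  have sKG: "subgroup (carrier K) G" unfolding K_def by (rule subgroup_subgroup_generated)
  have HK: "H \<subseteq> carrier K" and WK: "W \<subseteq> carrier K" using SK unfolding S_def by auto
  have csub: "cset G x H \<subseteq> cset K x H \<and> cset G x H \<subseteq> carrier K" if x: "x \<in> W" for x
  proof -
    have xK: "x \<in> carrier K" using x WK by auto
    have "inv\<^bsub>K\<^esub> x = inv x" using inv_subgroup_generated[of x S] xK unfolding K_def by simp
    then have eq: "cset K x H = cset G x H" unfolding cset_def K_def by simp
    have "cset G x H \<subseteq> carrier K"
    proof
      fix v assume "v \<in> cset G x H"
      then obtain h where h: "h \<in> H" "v = x \<otimes> h \<otimes> inv x" unfolding cset_def by blast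
      have ix: "inv x \<in> carrier K" using subgroup.m_inv_closed[OF sKG xK] .
      have "h \<in> carrier K" using h HK by blast
      then have "x \<otimes> h \<in> carrier K" using subgroup.m_closed[OF sKG xK] by simp
      then show "v \<in> carrier K" using h(2) subgroup.m_closed[OF sKG _ ix] by simp
    qed
    then show ?thesis using eq by simp
  qed
  have A1: "(\<Union>x\<in>W. cset G x H) \<subseteq> carrier K" using csub by blast
  have A2: "(\<Union>x\<in>W. cset G x H) \<subseteq> (\<Union>x\<in>carrier K. cset K x H)" using csub WK by blast
  have A1': "(\<Union>x\<in>W. cset G x H) \<subseteq> carrier (subgroup_generated G S)" using A1 unfolding K_def .
  have "g \<in> generate K (\<Union>x\<in>W. cset G x H)"
    using subsetD[OF gen_transfer[OF A1'] W(3)] unfolding K_def .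
  then have "g \<in> generate K (\<Union>x\<in>carrier K. cset K x H)"
    using group.mono_generate[OF gK A2] by blast
  then obtain n :: nat where n: "n > 0" "g [^]\<^bsub>K\<^esub> n = \<one>\<^bsub>K\<^esub>" using perK unfolding per_def by blast
  then have "g [^] n = \<one>" unfolding K_def by (simp add: pow_subgroup_generated)
  then show False using gnp n(1) by blast
qed

end

theorem lemma3p5:
  fixes G :: "('a, 'b) monoid_scheme"
  assumes "group G"
    and "locally_nilpotent G"
    and "\<not> periodic_group G"
  shows "\<not> (\<exists>H. subgroup H G \<and> finite H \<and> contranormal H G)"
  using group.main_aux[OF assms(1) assms(2) assms(3)] by blast


end
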